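(* Let $X$ be a connected, locally connected, Hausdorff, normal, first countable topological space, $V$ a finite dimensional Euclidean vector space, and $f:X\to V$ a continuous closed map that has local convexity data and is locally fiber connected. Then $\tilde f:X_f\to V$ is a proper map, and for every $[x]\in X_f$ and $r>0$ the closed ball $B_r([x]):=\{[y]\in X_f\mid d([x],[y])\le r\}$ is compact.
   Context: A subset $C\subset V$ is a cone with vertex $v_0$ if $v_0\in C$ and $(1-\lambda)v_0+\lambda v\in C$ for every $\lambda\ge 0$ and every $v\in C$, $v\ne v_0$; it is a convex cone if it is moreover convex. A continuous map $f:X\to V$ has local convexity data if for each $x\in X$ and every sufficiently small open neighborhood $U_x$ of $x$ there is a convex cone $C_x\subset V$ with vertex $f(x)$, endowed with the subspace topology from $V$, such that (VN) $f(U_x)\subset C_x$ and $f(U_x)$ is a neighborhood of $f(x)$ in $C_x$; and (SLO) $f|_{U_x}:U_x\to C_x$ is an open map, and for every neighborhood $U'_x\subset U_x$ of $x$ the set $f(U'_x)$ is a neighborhood of $f(x)$ in $C_x$. A subset $A\subset X$ satisfies condition (LFC) if for every $a\in A$, the set $A$ does not intersect two different connected components of the fiber $f^{-1}(f(a))$. The map $f$ is locally fiber connected if for every $x\in X$, every open neighborhood of $x$ contains a neighborhood $U_x$ of $x$ satisfying (LFC). Declare $x\sim y$ in $X$ iff $f(x)=f(y)$ and $x,y$ lie in the same connected component of $f^{-1}(f(x))$; $X_f:=X/\!\sim$ with the quotient topology, $\pi_f:X\to X_f$ is the projection and $\tilde f:X_f\to V$ is the unique map with $\tilde f\circ\pi_f=f$.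 The distance $d$ on $X_f$: $d([x],[y])$ is the infimum of the lengths $l(\tilde f\circ\gamma)$, measured with the Euclidean distance of $V$, over all continuous curves $\gamma:[a,b]\to X_f$ with $\gamma(a)=[x]$, $\gamma(b)=[y]$. A continuous map between Hausdorff spaces is proper if it is closed and all its fibers are compact. *)

theory Defs
  imports "HOL-Analysis.Analysis"
begin

definition cone_with_vertex :: "'b::real_vector set \<Rightarrow> 'b \<Rightarrow> bool" where
  "cone_with_vertex C v0 \<longleftrightarrow> v0 \<in> C \<and>
     (\<forall>v\<in>C. \<forall>t::real. v \<noteq> v0 \<and> t \<ge> 0 \<longrightarrow> (1 - t) *\<^sub>R v0 + t *\<^sub>R v \<in> C)"

definition convex_cone_with_vertex :: "'b::real_vector set \<Rightarrow> 'b \<Rightarrow> bool" where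
  "convex_cone_with_vertex C v0 \<longleftrightarrow> cone_with_vertex C v0 \<and> convex C"

definition nbhd_in :: "'a topology \<Rightarrow> 'a \<Rightarrow> 'a set \<Rightarrow> bool" where
  "nbhd_in X x N \<longleftrightarrow> N \<subseteq> topspace X \<and> (\<exists>G. openin X G \<and> x \<in> G \<and> G \<subseteq> N)"

definition local_convexity_data :: "'a topology \<Rightarrow> ('a \<Rightarrow> 'b::euclidean_space) \<Rightarrow> bool" where
  "local_convexity_data X f \<longleftrightarrow>
    (\<forall>x\<in>topspace X. \<exists>W. openin X W \<and> x \<in> W \<and>
      (\<forall>U. openin X U \<and> x \<in> U \<and> U \<subseteq> W \<longrightarrow>
        (\<exists>C. convex_cone_with_vertex C (f x) \<and>
             \<comment> \<open>(VN)\<close>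
             f ` U \<subseteq> C \<and> nbhd_in (top_of_set C) (f x) (f ` U) \<and>
             \<comment> \<open>(SLO)\<close>
             open_map (subtopology X U) (top_of_set C) f \<and>
             (\<forall>U'. nbhd_in X x U' \<and> U' \<subseteq> U \<longrightarrow> nbhd_in (top_of_set C) (f x) (f ` U')))))"

definition fiber :: "'a topology \<Rightarrow> ('a \<Rightarrow> 'b) \<Rightarrow> 'a \<Rightarrow> 'a set" where
  "fiber X f a = {y \<in> topspace X. f y = f a}"

definition LFC :: "'a topology \<Rightarrow> ('a \<Rightarrow> 'b) \<Rightarrow> 'a set \<Rightarrow> bool" where
  "LFC X f A \<longleftrightarrow> (\<forall>a\<in>A. \<forall>y\<in>A. \<forall>z\<in>A. y \<in> fiber X f a \<and> z \<in> fiber X f a \<longrightarrow>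
       connected_component_of (subtopology X (fiber X f a)) y z)"

definition locally_fiber_connected :: "'a topology \<Rightarrow> ('a \<Rightarrow> 'b) \<Rightarrow> bool" where
  "locally_fiber_connected X f \<longleftrightarrow>
    (\<forall>x\<in>topspace X. \<forall>W. openin X W \<and> x \<in> W \<longrightarrow>
       (\<exists>U. nbhd_in X x U \<and> U \<subseteq> W \<and> LFC X f U))"

(* the projection pi_f: x \<mapsto> [x], the connected component of x in its fiber *)
definition fclass :: "'a topology \<Rightarrow> ('a \<Rightarrow> 'b) \<Rightarrow> 'a \<Rightarrow> 'a set" where
  "fclass X f x = connected_component_of_set (subtopology X (fiber X f x)) x"

definition Xf_top :: "'a topology \<Rightarrow> ('a \<Rightarrow> 'b) \<Rightarrow> 'a set topology" where
  "Xf_top X f = topology (\<lambda>U. U \<subseteq> fclass X f ` topspace X \<and>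
                               openin X {x \<in> topspace X. fclass X f x \<in> U})"

lemma istopology_Xf:
  "istopology (\<lambda>U. U \<subseteq> fclass X f ` topspace X \<and>
                               openin X {x \<in> topspace X. fclass X f x \<in> U})"
proof -
  have 1: "{x \<in> topspace X. fclass X f x \<in> S \<inter> T} =
           {x \<in> topspace X. fclass X f x \<in> S} \<inter> {x \<in> topspace X. fclass X f x \<in> T}" for S T
    by auto
  have 2: "{x \<in> topspace X. fclass X f x \<in> \<Union>K} =
           \<Union>((\<lambda>S. {x \<in> topspace X. fclass X f x \<in> S}) ` K)" for K
    by auto
  show ?thesis unfolding istopology_def
    apply (intro conjI allI impI)
    subgoal by blast
    subgoal for S T unfolding 1 by (intro openin_Int) simp_all
    subgoal by blast
    subgoal for K unfolding 2 by (intro openin_Union) auto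
    done
qed

lemma openin_Xf_top:
  "openin (Xf_top X f) U \<longleftrightarrow> U \<subseteq> fclass X f ` topspace X \<and>
                               openin X {x \<in> topspace X. fclass X f x \<in> U}"
  unfolding Xf_top_def topology_inverse'[OF istopology_Xf] ..

definition ftilde :: "('a \<Rightarrow> 'b) \<Rightarrow> 'a set \<Rightarrow> 'b" where
  "ftilde f c = f (SOME x. x \<in> c)"

definition curve_length :: "(real \<Rightarrow> 'b::metric_space) \<Rightarrow> real \<Rightarrow> real \<Rightarrow> ereal" where
  "curve_length g a b =
     (SUP t \<in> {t. t \<noteq> [] \<and> sorted t \<and> hd t = a \<and> last t = b}.
        ereal (\<Sum>i<length t - 1. dist (g (t ! i)) (g (t ! Suc i))))"

(* the distance d on X_f (value \<infinity> if no curve of finite length exists) *)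
definition Xf_dist :: "'a topology \<Rightarrow> ('a \<Rightarrow> 'b::euclidean_space) \<Rightarrow> 'a set \<Rightarrow> 'a set \<Rightarrow> ereal" where
  "Xf_dist X f p q =
     (INF (\<gamma>, a, b) \<in> {(\<gamma>, a, b). a \<le> b \<and>
            continuous_map (top_of_set {a..b}) (Xf_top X f) \<gamma> \<and> \<gamma> a = p \<and> \<gamma> b = q}.
        curve_length (ftilde f \<circ> \<gamma>) a b)"

end

theory Submission
  imports Defs
begin
lemma fclass_sub: "fclass X f x \<subseteq> fiber X f x"
  unfolding fclass_def using connected_component_of_subset_topspace by fastforce

lemma fiber_sub: "fiber X f x \<subseteq> topspace X"
  unfolding fiber_def by auto

lemma fclass_refl: "x \<in> topspace X \<Longrightarrow> x \<in> fclass X f x"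
  unfolding fclass_def fiber_def by (simp add: connected_component_of_refl)

lemma ftilde_fclass: assumes "x \<in> topspace X" shows "ftilde f (fclass X f x) = f x"
proof -
  have "(SOME y. y \<in> fclass X f x) \<in> fclass X f x"
    using fclass_refl[OF assms] by (rule someI)
  then show ?thesis using fclass_sub unfolding ftilde_def fiber_def by fastforce
qed

lemma fiber_eq: "y \<in> fiber X f x \<Longrightarrow> fiber X f y = fiber X f x"
  unfolding fiber_def by auto

lemma fclass_eq_iff:
  assumes "y \<in> fiber X f x" "x \<in> topspace X"
  shows "fclass X f y = fclass X f x \<longleftrightarrow> connected_component_of (subtopology X (fiber X f x)) x y"
proof -
  have x: "x \<in> fiber X f x" using assms unfolding fiber_def by auto
  have "fclass X f y = connected_component_of_set (subtopology X (fiber X f x)) y"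
    unfolding fclass_def fiber_eq[OF assms(1)] ..
  then show ?thesis unfolding fclass_def
    using connected_component_of_eq[of "subtopology X (fiber X f x)" x y] assms x fiber_sub[of X f x]
    by (auto simp: fun_eq_iff)
qed

lemma topspace_Xf: "topspace (Xf_top X f) = fclass X f ` topspace X"
proof (rule subset_antisym)
  have "{x \<in> topspace X. fclass X f x \<in> fclass X f ` topspace X} = topspace X" by auto
  then have "openin (Xf_top X f) (fclass X f ` topspace X)"
    unfolding openin_Xf_top by auto
  then show "fclass X f ` topspace X \<subseteq> topspace (Xf_top X f)"
    by (rule openin_subset)
  show "topspace (Xf_top X f) \<subseteq> fclass X f ` topspace X"
    using openin_topspace[of "Xf_top X f"] unfolding openin_Xf_top by blast
qed

lemma cont_pi: "continuous_map X (Xf_top X f) (fclass X f)"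
  unfolding continuous_map_def topspace_Xf openin_Xf_top by auto

lemma cont_ftilde: assumes "continuous_map X euclidean f"
  shows "continuous_map (Xf_top X f) euclidean (ftilde f)"
  unfolding continuous_map_def topspace_Xf
proof (intro conjI allI impI)
  show "ftilde f \<in> fclass X f ` topspace X \<rightarrow> topspace euclidean" by simp
  fix U :: "'b set" assume U: "openin euclidean U"
  have eq: "{x \<in> topspace X. fclass X f x \<in> {x \<in> fclass X f ` topspace X. ftilde f x \<in> U}} = {x \<in> topspace X. f x \<in> U}"
    using ftilde_fclass[of _ X f] by auto
  have "openin X {x \<in> topspace X. f x \<in> U}"
    using assms U by (simp add: continuous_map_def)
  then show "openin (Xf_top X f) {x \<in> fclass X f ` topspace X. ftilde f x \<in> U}"
    unfolding openin_Xf_top eq by auto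
qed

lemma closed_ftilde: assumes "closed_map X euclidean f"
  shows "closed_map (Xf_top X f) euclidean (ftilde f)"
  unfolding closed_map_def
proof (intro allI impI)
  fix A assume A: "closedin (Xf_top X f) A"
  then have sub: "A \<subseteq> fclass X f ` topspace X" using closedin_subset topspace_Xf by metis
  have "closedin X {x \<in> topspace X. fclass X f x \<in> A}"
    using closedin_continuous_map_preimage[OF cont_pi A] .
  then have "closedin euclidean (f ` {x \<in> topspace X. fclass X f x \<in> A})"
    using assms closed_map_def by blast
  moreover have "f ` {x \<in> topspace X. fclass X f x \<in> A} = ftilde f ` A"
  proof
    show "f ` {x \<in> topspace X. fclass X f x \<in> A} \<subseteq> ftilde f ` A"
    proof
      fix z assume "z \<in> f ` {x \<in> topspace X. fclass X f x \<in> A}"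
      then obtain x where "x \<in> topspace X" "fclass X f x \<in> A" "z = f x" by auto
      then show "z \<in> ftilde f ` A" using ftilde_fclass[of x X f] by (metis image_eqI)
    qed
    show "ftilde f ` A \<subseteq> f ` {x \<in> topspace X. fclass X f x \<in> A}"
    proof
      fix z assume "z \<in> ftilde f ` A"
      then obtain c where c: "c \<in> A" "z = ftilde f c" by auto
      then obtain x where x: "x \<in> topspace X" "c = fclass X f x" using sub by auto
      then have "z = f x" using c ftilde_fclass[of x X f] by simp
      then show "z \<in> f ` {x \<in> topspace X. fclass X f x \<in> A}"
        using x c by auto
    qed
  qed
  ultimately show "closedin euclidean (ftilde f ` A)" by simp
qed

lemma LFC_mono: "A \<subseteq> B \<Longrightarrow> LFC X f B \<Longrightarrow> LFC X f A"
  unfolding LFC_def by (meson subsetD)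

lemma good_nbhd:
  assumes "local_convexity_data X f" "locally_fiber_connected X f" "x \<in> topspace X"
  obtains U C where "openin X U" "x \<in> U" "LFC X f U" "convex_cone_with_vertex C (f x)"
    "f ` U \<subseteq> C" "nbhd_in (top_of_set C) (f x) (f ` U)"
    "open_map (subtopology X U) (top_of_set C) f"
proof -
  have "\<exists>W. openin X W \<and> x \<in> W \<and>
      (\<forall>U. openin X U \<and> x \<in> U \<and> U \<subseteq> W \<longrightarrow>
        (\<exists>C. convex_cone_with_vertex C (f x) \<and>
             f ` U \<subseteq> C \<and> nbhd_in (top_of_set C) (f x) (f ` U) \<and>
             open_map (subtopology X U) (top_of_set C) f \<and>
             (\<forall>U'. nbhd_in X x U' \<and> U' \<subseteq> U \<longrightarrow> nbhd_in (top_of_set C) (f x) (f ` U'))))"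
    using assms(1) unfolding local_convexity_data_def using assms(3) by (rule bspec)
  then obtain W where W: "openin X W" "x \<in> W" and
    H: "\<forall>U. openin X U \<and> x \<in> U \<and> U \<subseteq> W \<longrightarrow>
        (\<exists>C. convex_cone_with_vertex C (f x) \<and>
             f ` U \<subseteq> C \<and> nbhd_in (top_of_set C) (f x) (f ` U) \<and>
             open_map (subtopology X U) (top_of_set C) f \<and>
             (\<forall>U'. nbhd_in X x U' \<and> U' \<subseteq> U \<longrightarrow> nbhd_in (top_of_set C) (f x) (f ` U')))"
    by (elim exE conjE)
  have "\<forall>W. openin X W \<and> x \<in> W \<longrightarrow> (\<exists>U. nbhd_in X x U \<and> U \<subseteq> W \<and> LFC X f U)"
    using assms(2) unfolding locally_fiber_connected_def using assms(3) by (rule bspec)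
  then have "\<exists>U. nbhd_in X x U \<and> U \<subseteq> W \<and> LFC X f U" using W by simp
  then obtain U' where U': "nbhd_in X x U'" "U' \<subseteq> W" "LFC X f U'"
    by (elim exE conjE)
  obtain G where G: "openin X G" "x \<in> G" "G \<subseteq> U'"
    using U'(1) unfolding nbhd_in_def by (elim exE conjE)
  have LG: "LFC X f G" using LFC_mono G(3) U'(3) by metis
  have "openin X G \<and> x \<in> G \<and> G \<subseteq> W" using G U'(2) by (meson order_trans)
  then have "\<exists>C. convex_cone_with_vertex C (f x) \<and>
             f ` G \<subseteq> C \<and> nbhd_in (top_of_set C) (f x) (f ` G) \<and>
             open_map (subtopology X G) (top_of_set C) f \<and>
             (\<forall>U'. nbhd_in X x U' \<and> U' \<subseteq> G \<longrightarrow> nbhd_in (top_of_set C) (f x) (f ` U'))"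
    using H by (rule_tac mp[OF spec[OF H]])
  then obtain C where C: "convex_cone_with_vertex C (f x)" "
             f ` G \<subseteq> C" "nbhd_in (top_of_set C) (f x) (f ` G)" "
             open_map (subtopology X G) (top_of_set C) f"
    by (elim exE conjE)
  show ?thesis by (rule that[OF G(1,2) LG C])
qed

lemma convex_isolated:
  fixes C :: "'b::euclidean_space set"
  assumes "convex C" "open T" "T \<inter> C = {a}"
  shows "C = {a}"
proof -
  have aC: "a \<in> C" "a \<in> T" using assms(3) by auto
  obtain e where e: "e > 0" "ball a e \<subseteq> T" using assms(2) aC(2) open_contains_ball by blast
  have "c = a" if c: "c \<in> C" for c
  proof (rule ccontr)
    assume ne: "c \<noteq> a"
    then have nc: "norm (c - a) > 0" by simp
    define t where "t = min (1/2) (e / (2 * norm (c - a)))"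
    have t: "t > 0" "t \<le> 1" using nc e by (auto simp: t_def)
    define p where "p = (1 - t) *\<^sub>R a + t *\<^sub>R c"
    have "p \<in> C" using assms(1) aC(1) c t unfolding p_def by (intro convexD_alt) auto
    have peq: "p - a = t *\<^sub>R (c - a)" unfolding p_def by (simp add: algebra_simps)
    have "t * norm (c - a) \<le> e / 2"
      using nc e unfolding t_def by (auto simp: min_def field_simps)
    moreover have "dist a p = t * norm (c - a)"
    proof -
      have "dist a p = norm (p - a)" by (metis dist_commute dist_norm)
      also have "\<dots> = t * norm (c - a)" using peq t by simp
      finally show ?thesis .
    qed
    ultimately have "dist a p < e" using e by simp
    then have "p \<in> ball a e" by simp
    then have "p \<in> T" using e(2) by blast
    then have "p \<in> T \<inter> C" using \<open>p \<in> C\<close> by blast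
    then have pa: "p = a" using assms(3) by blast
    have "t *\<^sub>R (c - a) = 0" using peq pa by (metis diff_self)
    then have "c - a = 0" using t(1) by simp
    then show False using ne by simp
  qed
  then show ?thesis using aC by blast
qed

lemma not_locally_constant:
  assumes conn: "connected_space X" and contf: "continuous_map X euclidean f"
    and lcd: "local_convexity_data X f" and lfc: "locally_fiber_connected X f"
    and nc: "\<not> (\<exists>c. \<forall>x\<in>topspace X. f x = c)"
    and x: "x \<in> topspace X" and N: "openin X N" "x \<in> N"
  shows "\<exists>z\<in>N. f z \<noteq> f x"
proof (rule ccontr)
  assume "\<not> ?thesis"
  then have xN: "\<forall>z\<in>N. f z = f x" by blast
  define S where "S = {x \<in> topspace X. \<exists>N. openin X N \<and> x \<in> N \<and> (\<forall>z\<in>N. f z = f x)}"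
  have xS: "x \<in> S" using x N xN unfolding S_def by blast
  have Sopen: "openin X S"
  proof (subst openin_subopen, intro ballI)
    fix y assume "y \<in> S"
    then obtain M where M: "openin X M" "y \<in> M" "\<forall>z\<in>M. f z = f y" unfolding S_def by blast
    have "M \<subseteq> S"
    proof
      fix z assume "z \<in> M"
      then have "\<forall>z'\<in>M. f z' = f z" using M(3) by metis
      moreover have "z \<in> topspace X" using \<open>z \<in> M\<close> openin_subset[OF M(1)] by blast
      ultimately show "z \<in> S" unfolding S_def using M(1) \<open>z \<in> M\<close> by blast
    qed
    then show "\<exists>T. openin X T \<and> y \<in> T \<and> T \<subseteq> S" using M by blast
  qed
  have Sclosed: "closedin X S"
  proof -
    have "X closure_of S \<subseteq> S"
    proof
      fix y assume y: "y \<in> X closure_of S"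
      then have yt: "y \<in> topspace X" by (simp add: in_closure_of)
      obtain U C where U: "openin X U" "y \<in> U" "LFC X f U" "convex_cone_with_vertex C (f y)"
        "f ` U \<subseteq> C" "nbhd_in (top_of_set C) (f y) (f ` U)" "open_map (subtopology X U) (top_of_set C) f"
        by (rule good_nbhd[OF lcd lfc yt])
      obtain s where s: "s \<in> S" "s \<in> U" using y U(1,2) unfolding in_closure_of by blast
      then obtain M where M: "openin X M" "s \<in> M" "\<forall>z\<in>M. f z = f s" unfolding S_def by blast
      have "openin (subtopology X U) (U \<inter> M)" using openin_subtopology_Int2[OF M(1)] .
      then have "openin (top_of_set C) (f ` (U \<inter> M))" using U(7) unfolding open_map_def by blast
      moreover have fUM: "f ` (U \<inter> M) = {f s}"
      proof
        show "f ` (U \<inter> M) \<subseteq> {f s}" using M(3) by blast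
        show "{f s} \<subseteq> f ` (U \<inter> M)" using M(2) s(2) by blast
      qed
      ultimately obtain T where T: "open T" "f ` (U \<inter> M) = C \<inter> T"
        unfolding openin_open by blast
      have TC: "T \<inter> C = {f s}" using T(2) fUM by (metis inf_commute)
      have "convex C" using U(4) unfolding convex_cone_with_vertex_def by simp
      then have "C = {f s}" using convex_isolated[OF _ T(1) TC] by blast
      then have "\<forall>z\<in>U. f z = f y"
      proof -
        assume Cs: "C = {f s}"
        have im: "\<And>z. z \<in> U \<Longrightarrow> f z = f s"
        proof -
          fix z assume "z \<in> U"
          then have "f z \<in> C" using U(5) by (meson image_subset_iff)
          then show "f z = f s" using Cs by simp
        qed
        show ?thesis using im[OF U(2)] im by metis
      qed
      then show "y \<in> S" unfolding S_def using U(1,2) yt by blast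
    qed
    moreover have "S \<subseteq> topspace X" unfolding S_def by blast
    ultimately show ?thesis using closure_of_subset_eq[of S X] by blast
  qed
  have "S = {} \<or> S = topspace X" using conn[unfolded connected_space_clopen_in, rule_format, of S] Sopen Sclosed by blast
  then have Sall: "S = topspace X" using xS by blast
  define T0 where "T0 = {z \<in> topspace X. f z \<in> {f x}}"
  have "closedin X T0" unfolding T0_def
    by (rule closedin_continuous_map_preimage[OF contf]) simp
  moreover have "openin X T0"
  proof (subst openin_subopen, intro ballI)
    fix y assume y: "y \<in> T0"
    then have "y \<in> S" using Sall unfolding T0_def by blast
    then obtain M where M: "openin X M" "y \<in> M" "\<forall>z\<in>M. f z = f y" unfolding S_def by blast
    have fy: "f y = f x" using y unfolding T0_def by blast
    have "M \<subseteq> T0"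
    proof
      fix z assume z: "z \<in> M"
      then have "f z = f x" using M(3) fy by metis
      moreover have "z \<in> topspace X" using z openin_subset[OF M(1)] by blast
      ultimately show "z \<in> T0" unfolding T0_def by blast
    qed
    then show "\<exists>T. openin X T \<and> y \<in> T \<and> T \<subseteq> T0" using M by blast
  qed
  moreover have "x \<in> T0" using x unfolding T0_def by simp
  ultimately have "T0 = topspace X" using conn[unfolded connected_space_clopen_in, rule_format, of T0] by blast
  then have "\<forall>z\<in>topspace X. f z = f x" unfolding T0_def by auto
  then show False using nc by blast
qed

lemma nat_close: fixes m n :: nat assumes "\<bar>real m - real n\<bar> < 1" shows "m = n"
proof (rule ccontr)
  assume "m \<noteq> n"
  then have "m + 1 \<le> n \<or> n + 1 \<le> m" by arith
  then have "real m + 1 \<le> real n \<or> real n + 1 \<le> real m" by (metis of_nat_1 of_nat_add of_nat_le_iff)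
  then show False using assms by arith
qed

lemma preimage_ball_open:
  fixes g :: "'a \<Rightarrow> 'c::metric_space"
  assumes "continuous_map X euclidean g"
  shows "openin X {z \<in> topspace X. g z \<in> ball c r}"
proof -
  have "openin euclidean (ball c r)" by simp
  then show ?thesis by (rule openin_continuous_map_preimage[OF assms])
qed

lemma fiber_classes_finite:
  assumes conn: "connected_space X" and haus: "Hausdorff_space X" and norm: "normal_space X"
    and contf: "continuous_map X euclidean f" and closedf: "closed_map X euclidean f"
    and lcd: "local_convexity_data X f" and lfc: "locally_fiber_connected X f"
  shows "finite (fclass X f ` {x \<in> topspace X. f x = v})"
proof (cases "\<exists>c. \<forall>x\<in>topspace X. f x = c")
  case True
  then obtain c where c: "\<forall>x\<in>topspace X. f x = c" by blast
  have "fclass X f x = topspace X" if x: "x \<in> topspace X" for x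
  proof -
    have "fiber X f x = topspace X" unfolding fiber_def using c x by auto
    then have "fclass X f x = connected_component_of_set X x"
      unfolding fclass_def by (simp only: subtopology_topspace)
    also have "\<dots> = topspace X" using connected_space_connected_component_set[THEN iffD1, OF conn] x by (rule bspec)
    finally show ?thesis .
  qed
  then have "fclass X f ` {x \<in> topspace X. f x = v} \<subseteq> {topspace X}" by auto
  then show ?thesis by (rule finite_subset) simp
next
  case False
  show ?thesis
  proof (rule ccontr)
    assume inf: "infinite (fclass X f ` {x \<in> topspace X. f x = v})"
    obtain h :: "nat \<Rightarrow> 'a set" where h: "inj h" "range h \<subseteq> fclass X f ` {x \<in> topspace X. f x = v}"
      using infinite_countable_subset[OF inf] by blast
    have "\<forall>n. \<exists>x. x \<in> topspace X \<and> f x = v \<and> fclass X f x = h n"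
    proof
      fix n
      have "h n \<in> fclass X f ` {x \<in> topspace X. f x = v}" using h(2) by blast
      then obtain x where "x \<in> {x \<in> topspace X. f x = v}" "h n = fclass X f x" by (rule imageE)
      then show "\<exists>x. x \<in> topspace X \<and> f x = v \<and> fclass X f x = h n" by blast
    qed
    from choice[OF this] obtain xs where xs0: "\<forall>n. xs n \<in> topspace X \<and> f (xs n) = v \<and> fclass X f (xs n) = h n" ..
    have xs: "\<And>n. xs n \<in> topspace X" "\<And>n. f (xs n) = v" "\<And>n. fclass X f (xs n) = h n"
      using xs0 by simp_all
    have sep: "\<exists>Ob. openin X Ob \<and> w \<in> Ob \<and> (\<forall>m n. xs m \<in> Ob \<longrightarrow> xs n \<in> Ob \<longrightarrow> m = n)"
      if w: "w \<in> topspace X" for w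
    proof -
      obtain U C where U: "openin X U" "w \<in> U" "LFC X f U" "convex_cone_with_vertex C (f w)"
        "f ` U \<subseteq> C" "nbhd_in (top_of_set C) (f w) (f ` U)" "open_map (subtopology X U) (top_of_set C) f"
        by (rule good_nbhd[OF lcd lfc w])
      have "m = n" if mn: "xs m \<in> U" "xs n \<in> U" for m n
      proof -
        have fm: "xs m \<in> fiber X f (xs m)" unfolding fiber_def using xs(1)[of m] by simp
        have fn: "xs n \<in> fiber X f (xs m)" unfolding fiber_def using xs(1)[of n] xs(2)[of n] xs(2)[of m] by simp
        have "connected_component_of (subtopology X (fiber X f (xs m))) (xs m) (xs n)"
          using U(3) mn fm fn unfolding LFC_def by blast
        then have "fclass X f (xs n) = fclass X f (xs m)"
          using fclass_eq_iff[OF fn xs(1)[of m]] by blast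
        then have "h n = h m" using xs(3) by metis
        then show "m = n" using h(1) by (metis injD)
      qed
      then show ?thesis using U(1,2) by blast
    qed
    have xinj: "inj xs"
    proof (rule injI)
      fix m n assume "xs m = xs n"
      then have "h m = h n" using xs(3) by metis
      then show "m = n" using h(1) by (metis injD)
    qed
    define D where "D = range xs"
    have Dsub: "D \<subseteq> topspace X" unfolding D_def using xs(1) by blast
    have t1: "t1_space X" using haus by (rule Hausdorff_imp_t1_space)
    have Dclosed: "closedin X D"
    proof -
      have "X closure_of D \<subseteq> D"
      proof
        fix w assume w: "w \<in> X closure_of D"
        then have wt: "w \<in> topspace X" by (simp add: in_closure_of)
        show "w \<in> D"
        proof (rule ccontr)
          assume wD: "w \<notin> D"
          obtain Ob where Ob: "openin X Ob" "w \<in> Ob" "\<forall>m n. xs m \<in> Ob \<longrightarrow> xs n \<in> Ob \<longrightarrow> m = n"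
            using sep[OF wt] by blast
          obtain y where y: "y \<in> D" "y \<in> Ob" using w Ob(1,2) unfolding in_closure_of by blast
          then obtain n0 where n0: "y = xs n0" unfolding D_def by blast
          have "w \<noteq> xs n0" using wD unfolding D_def by blast
          then obtain U' where U': "openin X U'" "w \<in> U'" "xs n0 \<notin> U'"
            using t1 wt xs(1)[of n0] unfolding t1_space_def by blast
          have "openin X (Ob \<inter> U')" using Ob(1) U'(1) by (rule openin_Int)
          moreover have "w \<in> Ob \<inter> U'" using Ob(2) U'(2) by blast
          ultimately obtain y' where y': "y' \<in> D" "y' \<in> Ob \<inter> U'" using w unfolding in_closure_of by blast
          then obtain m where m: "y' = xs m" unfolding D_def by blast
          have "m = n0" using Ob(3) y' m y n0 by blast
          then show False using y' m U'(3) by blast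
        qed
      qed
      then show ?thesis using closure_of_subset_eq[of D X] Dsub by blast
    qed
    have Dopen: "openin (subtopology X D) A" if A: "A \<subseteq> D" for A
    proof (subst openin_subopen, intro ballI)
      fix a assume "a \<in> A"
      then obtain n where n: "a = xs n" using A unfolding D_def by blast
      obtain Ob where Ob: "openin X Ob" "xs n \<in> Ob" "\<forall>m n. xs m \<in> Ob \<longrightarrow> xs n \<in> Ob \<longrightarrow> m = n"
        using sep[OF xs(1)[of n]] by blast
      have "D \<inter> Ob = {xs n}"
      proof
        show "D \<inter> Ob \<subseteq> {xs n}"
        proof
          fix z assume z: "z \<in> D \<inter> Ob"
          then obtain m where m: "z = xs m" unfolding D_def by blast
          then have "m = n" using Ob(2,3) z by blast
          then show "z \<in> {xs n}" using m by blast
        qed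
        show "{xs n} \<subseteq> D \<inter> Ob" using Ob(2) unfolding D_def by blast
      qed
      moreover have "openin (subtopology X D) (D \<inter> Ob)" using Ob(1) by (rule openin_subtopology_Int2)
      ultimately show "\<exists>T. openin (subtopology X D) T \<and> a \<in> T \<and> T \<subseteq> A"
        using n \<open>a \<in> A\<close> by (metis empty_subsetI insert_subset singletonI)
    qed
    define \<phi> where "\<phi> = (\<lambda>z. real (inv xs z))"
    have contphi: "continuous_map (subtopology X D) euclideanreal \<phi>"
      unfolding continuous_map_def
    proof (intro conjI allI impI)
      show "\<phi> \<in> topspace (subtopology X D) \<rightarrow> topspace euclideanreal" by simp
      fix U :: "real set"
      have "{x \<in> topspace (subtopology X D). \<phi> x \<in> U} \<subseteq> D" by auto
      then show "openin (subtopology X D) {x \<in> topspace (subtopology X D). \<phi> x \<in> U}"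
        by (rule Dopen)
    qed
    have "\<exists>g::'a\<Rightarrow>real. continuous_map X euclidean g \<and> (\<forall>x \<in> D. g x = \<phi> x)"
      using normal_space_iff_Tietze[THEN iffD1, OF norm, rule_format, OF conjI[OF Dclosed contphi]] .
    then obtain g where g0: "continuous_map X euclidean g \<and> (\<forall>x \<in> D. g x = \<phi> x)" ..
    have g: "continuous_map X euclideanreal g" "\<And>x. x \<in> D \<Longrightarrow> g x = \<phi> x" using g0 by simp_all
    have gxs: "g (xs n) = real n" for n
    proof -
      have "xs n \<in> D" unfolding D_def by (rule rangeI)
      then have "g (xs n) = \<phi> (xs n)" by (rule g(2))
      also have "\<phi> (xs n) = real n" unfolding \<phi>_def using inv_f_f[OF xinj, of n] by (rule arg_cong)
      finally show ?thesis .
    qed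
    define Nn where "Nn n = {z \<in> topspace X. g z \<in> ball (real n) (1/4)} \<inter> {z \<in> topspace X. f z \<in> ball v (1 / (real n + 1))}" for n
    have Nopen: "openin X (Nn n)" for n
    proof -
      have "openin X {z \<in> topspace X. g z \<in> ball (real n) (1/4)}"
        using g(1) by (rule preimage_ball_open)
      moreover have "openin X {z \<in> topspace X. f z \<in> ball v (1 / (real n + 1))}"
        using contf by (rule preimage_ball_open)
      ultimately show ?thesis unfolding Nn_def by (rule openin_Int)
    qed
    have xsN: "xs n \<in> Nn n" for n
      unfolding Nn_def using xs(1)[of n] xs(2)[of n] gxs[of n] by simp
    have "\<forall>n. \<exists>z. z \<in> Nn n \<and> f z \<noteq> f (xs n)"
      using not_locally_constant[OF conn contf lcd lfc False xs(1) Nopen xsN] by blast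
    from choice[OF this] obtain zs where zs0: "\<forall>n. zs n \<in> Nn n \<and> f (zs n) \<noteq> f (xs n)" ..
    have zs: "\<And>n. zs n \<in> Nn n" "\<And>n. f (zs n) \<noteq> f (xs n)" using zs0 by simp_all
    have zst: "zs n \<in> topspace X" for n using zs(1)[of n] unfolding Nn_def by blast
    have zsg: "\<bar>real n - g (zs n)\<bar> < 1/4" for n using zs(1)[of n] unfolding Nn_def by (simp add: dist_real_def)
    have zsf: "dist (f (zs n)) v < 1 / (real n + 1)" for n
      using zs(1)[of n] unfolding Nn_def by (simp add: dist_commute)
    have zsv: "f (zs n) \<noteq> v" for n using zs(2)[of n] xs(2)[of n] by simp
    define A where "A = X closure_of (range zs)"
    have Anot: "f w \<noteq> v" if w: "w \<in> A" for w
    proof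
      assume fw: "f w = v"
      have wt: "w \<in> topspace X" using w unfolding A_def by (simp add: in_closure_of)
      define Ob where "Ob = {z \<in> topspace X. g z \<in> ball (g w) (1/4)}"
      have Obo: "openin X Ob" unfolding Ob_def
        using g(1) by (rule preimage_ball_open)
      have wOb: "w \<in> Ob" unfolding Ob_def using wt by simp
      have uniq: "m = n" if "zs m \<in> Ob" "zs n \<in> Ob" for m n
      proof -
        have "\<bar>g w - g (zs m)\<bar> < 1/4" "\<bar>g w - g (zs n)\<bar> < 1/4"
          using that unfolding Ob_def by (simp_all add: dist_real_def)
        moreover note zsg[of m] zsg[of n]
        ultimately have "\<bar>real m - real n\<bar> < 1" by linarith
        then show "m = n" by (rule nat_close)
      qed
      obtain y where y: "y \<in> range zs" "y \<in> Ob" using w Obo wOb unfolding A_def in_closure_of by blast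
      then obtain n0 where n0: "y = zs n0" by blast
      have "w \<noteq> zs n0" using fw zsv[of n0] by metis
      then obtain U' where U': "openin X U'" "w \<in> U'" "zs n0 \<notin> U'"
        using t1 wt zst[of n0] unfolding t1_space_def by blast
      have "openin X (Ob \<inter> U')" using Obo U'(1) by (rule openin_Int)
      moreover have "w \<in> Ob \<inter> U'" using wOb U'(2) by blast
      ultimately obtain y' where y': "y' \<in> range zs" "y' \<in> Ob \<inter> U'" using w unfolding A_def in_closure_of by blast
      then obtain m where m: "y' = zs m" by blast
      have zm: "zs m \<in> Ob" using y'(2) unfolding m by blast
      have zn0: "zs n0 \<in> Ob" using y(2) unfolding n0 by blast
      have "m = n0" using uniq[OF zm zn0] .
      then show False using y'(2) U'(3) unfolding m by blast
    qed
    have "closedin euclidean (f ` A)" using closedf unfolding closed_map_def A_def by simp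
    then have clA: "closed (f ` A)" by (simp only: closed_closedin)
    have zsA: "zs n \<in> A" for n
    proof -
      have "range zs \<subseteq> topspace X" using zst by (simp add: image_subset_iff)
      then have "range zs \<subseteq> A" unfolding A_def by (rule closure_of_subset)
      then show ?thesis by blast
    qed
    have lim: "(\<lambda>n. f (zs n)) \<longlonglongrightarrow> v"
      unfolding lim_sequentially
    proof (intro allI impI)
      fix r :: real assume r: "r > 0"
      obtain N where N: "inverse (real (Suc N)) < r" using reals_Archimedean[OF r] by blast
      have "dist (f (zs n)) v < r" if "n \<ge> N" for n
      proof -
        have "1 / (real n + 1) \<le> inverse (real (Suc N))"
          using that by (simp add: inverse_eq_divide frac_le)
        then show ?thesis using zsf[of n] N by linarith
      qed
      then show "\<exists>no. \<forall>n\<ge>no. dist (f (zs n)) v < r" by blast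
    qed
    have "v \<in> f ` A" using clA _ lim by (rule closed_sequentially) (use zsA in blast)
    then obtain w where "w \<in> A" "f w = v" by blast
    then show False using Anot by blast
  qed
qed

fun psum :: "(real \<Rightarrow> 'b::metric_space) \<Rightarrow> real list \<Rightarrow> real" where
  "psum g (x # y # zs) = dist (g x) (g y) + psum g (y # zs)"
| "psum g _ = 0"

lemma psum_eq: "(\<Sum>i<length t - 1. dist (g (t ! i)) (g (t ! Suc i))) = psum g t"
proof (induction g t rule: psum.induct)
  case (1 g x y zs)
  have "(\<Sum>i<length (x # y # zs) - 1. dist (g ((x # y # zs) ! i)) (g ((x # y # zs) ! Suc i)))
      = (\<Sum>i<Suc (length (y # zs) - 1). dist (g ((x # y # zs) ! i)) (g ((x # y # zs) ! Suc i)))"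
    by simp
  also have "\<dots> = dist (g x) (g y) + (\<Sum>i<length (y # zs) - 1. dist (g ((y # zs) ! i)) (g ((y # zs) ! Suc i)))"
    by (subst sum.lessThan_Suc_shift) simp
  also have "\<dots> = psum g (x # y # zs)" using "1.IH" by simp
  finally show ?case .
qed simp_all

definition parts :: "real \<Rightarrow> real \<Rightarrow> real list set" where
  "parts a b = {t. t \<noteq> [] \<and> sorted t \<and> hd t = a \<and> last t = b}"

lemma curve_length_alt: "curve_length g a b = (SUP t \<in> parts a b. ereal (psum g t))"
  unfolding curve_length_def parts_def psum_eq ..

lemma CL_upper: "t \<in> parts a b \<Longrightarrow> ereal (psum g t) \<le> curve_length g a b"
  unfolding curve_length_alt by (rule SUP_upper)

lemma CL_least: "(\<And>t. t \<in> parts a b \<Longrightarrow> ereal (psum g t) \<le> L) \<Longrightarrow> curve_length g a b \<le> L"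
  unfolding curve_length_alt by (rule SUP_least)

lemma sorted_hd_le: "sorted l \<Longrightarrow> z \<in> set l \<Longrightarrow> hd l \<le> z"
  by (cases l) auto

lemma sorted_le_last: "sorted l \<Longrightarrow> z \<in> set l \<Longrightarrow> z \<le> last l"
proof (induction l)
  case Nil then show ?case by simp
next
  case (Cons x xs)
  show ?case
  proof (cases "xs = []")
    case True then show ?thesis using Cons.prems by simp
  next
    case False
    have lx: "last (x # xs) = last xs" using False by simp
    have "last xs \<in> set xs" using False by simp
    then have xl: "x \<le> last xs" using Cons.prems(1) by simp
    show ?thesis
    proof (cases "z = x")
      case True then show ?thesis using lx xl by simp
    next
      case False
      then have "z \<in> set xs" using Cons.prems(2) by simp
      then show ?thesis using Cons.IH Cons.prems(1) lx by simp
    qed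
  qed
qed

lemma psum_cong: "(\<And>z. z \<in> set t \<Longrightarrow> g z = h z) \<Longrightarrow> psum g t = psum h t"
  by (induction g t rule: psum.induct) simp_all

lemma CL_cong:
  assumes "\<And>s. a \<le> s \<Longrightarrow> s \<le> b \<Longrightarrow> g s = h s"
  shows "curve_length g a b = curve_length h a b"
  unfolding curve_length_alt
proof (rule SUP_cong[OF refl])
  fix t assume t: "t \<in> parts a b"
  have "psum g t = psum h t"
  proof (rule psum_cong)
    fix z assume z: "z \<in> set t"
    have "a \<le> z" using t z sorted_hd_le unfolding parts_def by blast
    moreover have "z \<le> b" using t z sorted_le_last unfolding parts_def by blast
    ultimately show "g z = h z" by (rule assms)
  qed
  then show "ereal (psum g t) = ereal (psum h t)" by simp
qed

lemma split_part:
  "t \<noteq> [] \<Longrightarrow> sorted t \<Longrightarrow> hd t \<le> b \<Longrightarrow> b \<le> last t \<Longrightarrow>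
   \<exists>t1 t2. t1 \<in> parts (hd t) b \<and> t2 \<in> parts b (last t) \<and> psum g t \<le> psum g t1 + psum g t2"
proof (induction t)
  case Nil then show ?case by simp
next
  case (Cons x rest)
  show ?case
  proof (cases rest)
    case Nil
    then have "b = x" using Cons.prems by simp
    then have "[x] \<in> parts (hd (x # rest)) b" "[x] \<in> parts b (last (x # rest))"
      using Nil unfolding parts_def by simp_all
    moreover have "psum g (x # rest) \<le> psum g [x] + psum g [x]" using Nil by simp
    ultimately show ?thesis by blast
  next
    case (Cons y zs)
    note rest = this
    have sx: "\<forall>z\<in>set rest. x \<le> z" "sorted rest" using Cons.prems(2) by simp_all
    have xy: "x \<le> y" using sx(1) rest by simp
    have lastt: "last (x # rest) = last rest" using rest by simp
    show ?thesis
    proof (cases "y \<le> b")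
      case True
      have "rest \<noteq> []" "hd rest \<le> b" "b \<le> last rest" using rest True Cons.prems(4) lastt by simp_all
      then obtain t1 t2 where t12: "t1 \<in> parts (hd rest) b" "t2 \<in> parts b (last rest)"
        "psum g rest \<le> psum g t1 + psum g t2"
        using Cons.IH sx(2) by blast
      have t1ne: "t1 \<noteq> []" and t1s: "sorted t1" and t1h: "hd t1 = y" and t1l: "last t1 = b"
        using t12(1) rest unfolding parts_def by simp_all
      obtain tt where tt: "t1 = y # tt" using t1ne t1h by (cases t1) auto
      have "\<forall>z\<in>set t1. y \<le> z" using t1s t1h sorted_hd_le by blast
      then have "\<forall>z\<in>set t1. x \<le> z" using xy by auto
      then have "sorted (x # t1)" using t1s by simp
      then have "x # t1 \<in> parts (hd (x # rest)) b" unfolding parts_def using t1ne t1l by simp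
      moreover have "t2 \<in> parts b (last (x # rest))" using t12(2) lastt by simp
      moreover have "psum g (x # rest) \<le> psum g (x # t1) + psum g t2"
        using t12(3) rest tt by simp
      ultimately show ?thesis by blast
    next
      case False
      have xb: "x \<le> b" using Cons.prems(3) by simp
      have "[x, b] \<in> parts (hd (x # rest)) b" unfolding parts_def using xb by simp
      moreover have "b # y # zs \<in> parts b (last (x # rest))"
        unfolding parts_def using False sx(2) rest lastt
        by (auto simp: sorted_hd_le)
      moreover have "psum g (x # rest) \<le> psum g [x, b] + psum g (b # y # zs)"
        using rest dist_triangle[of "g x" "g y" "g b"] by simp
      ultimately show ?thesis by blast
    qed
  qed
qed

lemma CL_add:
  assumes "a \<le> b" "b \<le> c"
  shows "curve_length g a c \<le> curve_length g a b + curve_length g b c"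
proof (rule CL_least)
  fix t assume t: "t \<in> parts a c"
  then have "t \<noteq> []" "sorted t" "hd t \<le> b" "b \<le> last t" using assms unfolding parts_def by simp_all
  then obtain t1 t2 where t12: "t1 \<in> parts (hd t) b" "t2 \<in> parts b (last t)" "psum g t \<le> psum g t1 + psum g t2"
    using split_part by blast
  have ht: "hd t = a" "last t = c" using t unfolding parts_def by simp_all
  have "ereal (psum g t) \<le> ereal (psum g t1) + ereal (psum g t2)" using t12(3) by simp
  also have "\<dots> \<le> curve_length g a b + curve_length g b c"
    using CL_upper[of t1 a b g] CL_upper[of t2 b c g] t12(1,2) ht by (intro add_mono) simp_all
  finally show "ereal (psum g t) \<le> curve_length g a b + curve_length g b c" .
qed

lemma CL_lower:
  assumes "a \<le> b"
  shows "ereal (dist (g a) (g b)) \<le> curve_length g a b"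
proof (cases "a = b")
  case True
  have "[a] \<in> parts a b" unfolding parts_def using True by simp
  then have "ereal (psum g [a]) \<le> curve_length g a b" by (rule CL_upper)
  then show ?thesis using True by simp
next
  case False
  have "[a, b] \<in> parts a b" unfolding parts_def using assms by simp
  then have "ereal (psum g [a, b]) \<le> curve_length g a b" by (rule CL_upper)
  then show ?thesis by simp
qed

lemma psum_lin:
  assumes lin: "\<And>x y. x \<le> y \<Longrightarrow> dist (g x) (g y) = (y - x) * c"
  shows "t \<noteq> [] \<Longrightarrow> sorted t \<Longrightarrow> psum g t = (last t - hd t) * c"
proof (induction t)
  case Nil then show ?case by simp
next
  case (Cons x rest)
  show ?case
  proof (cases rest)
    case Nil then show ?thesis by simp
  next
    case (Cons y zs)
    have xy: "x \<le> y" using Cons.prems(2) Cons by simp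
    have "psum g rest = (last rest - y) * c" using Cons.IH Cons.prems(2) Cons by simp
    then show ?thesis using Cons lin[OF xy] by (simp add: algebra_simps)
  qed
qed

lemma psum_linear:
  fixes A B :: "'b::real_normed_vector"
  shows "t \<noteq> [] \<Longrightarrow> sorted t \<Longrightarrow> psum (\<lambda>s. A + (s - b0) *\<^sub>R (B - A)) t = (last t - hd t) * norm (B - A)"
proof (rule psum_lin)
  fix x y :: real assume xy: "x \<le> y"
  have "dist (A + (x - b0) *\<^sub>R (B - A)) (A + (y - b0) *\<^sub>R (B - A)) = norm ((x - y) *\<^sub>R (B - A))"
    unfolding dist_norm by (simp add: algebra_simps)
  also have "\<dots> = (y - x) * norm (B - A)" using xy by simp
  finally show "dist (A + (x - b0) *\<^sub>R (B - A)) (A + (y - b0) *\<^sub>R (B - A)) = (y - x) * norm (B - A)" .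
qed

lemma CL_linear:
  fixes A B :: "'b::real_normed_vector"
  shows "curve_length (\<lambda>s. A + (s - b0) *\<^sub>R (B - A)) b0 (b0 + 1) \<le> ereal (dist A B)"
proof (rule CL_least)
  fix t assume t: "t \<in> parts b0 (b0 + 1)"
  then have "psum (\<lambda>s. A + (s - b0) *\<^sub>R (B - A)) t = (last t - hd t) * norm (B - A)"
    unfolding parts_def by (intro psum_linear) simp_all
  also have "\<dots> = dist A B" using t unfolding parts_def by (simp add: dist_norm norm_minus_commute)
  finally show "ereal (psum (\<lambda>s. A + (s - b0) *\<^sub>R (B - A)) t) \<le> ereal (dist A B)" by simp
qed

lemma Xf_dist_le:
  "a \<le> b \<Longrightarrow> continuous_map (top_of_set {a..b}) (Xf_top X f) \<gamma> \<Longrightarrow> \<gamma> a = p \<Longrightarrow> \<gamma> b = q \<Longrightarrow>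
   Xf_dist X f p q \<le> curve_length (ftilde f \<circ> \<gamma>) a b"
  unfolding Xf_dist_def by (rule INF_lower2[of "(\<gamma>, a, b)"]) auto

lemma Xf_dist_lessE:
  assumes "Xf_dist X f p q < L"
  shows "\<exists>\<gamma> a b. a \<le> b \<and> continuous_map (top_of_set {a..b}) (Xf_top X f) \<gamma> \<and> \<gamma> a = p \<and> \<gamma> b = q \<and>
     curve_length (ftilde f \<circ> \<gamma>) a b < L"
  using assms unfolding Xf_dist_def INF_less_iff by auto

lemma Xf_dist_ge:
  assumes "\<And>(\<gamma>::real \<Rightarrow> 'a set) (a::real) b. a \<le> b \<Longrightarrow> continuous_map (top_of_set {a..b}) (Xf_top X f) \<gamma> \<Longrightarrow> \<gamma> a = p \<Longrightarrow> \<gamma> b = q \<Longrightarrow>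
     L \<le> curve_length (ftilde f \<circ> \<gamma>) a b"
  shows "L \<le> Xf_dist X f p q"
  unfolding Xf_dist_def by (rule INF_greatest) (use assms in auto)

lemma dist_le_Xf_dist:
  assumes "x \<in> topspace X" "y \<in> topspace X"
  shows "ereal (dist (f x) (f y)) \<le> Xf_dist X f (fclass X f x) (fclass X f y)"
proof (rule Xf_dist_ge)
  fix \<gamma> :: "real \<Rightarrow> 'a set" and a b :: real
  assume ab: "a \<le> b" and "continuous_map (top_of_set {a..b}) (Xf_top X f) \<gamma>"
    and e: "\<gamma> a = fclass X f x" "\<gamma> b = fclass X f y"
  from e have "(ftilde f \<circ> \<gamma>) a = f x" "(ftilde f \<circ> \<gamma>) b = f y"
    using ftilde_fclass[OF assms(1)] ftilde_fclass[OF assms(2)] by simp_all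
  then show "ereal (dist (f x) (f y)) \<le> curve_length (ftilde f \<circ> \<gamma>) a b"
    using CL_lower[OF ab, of "ftilde f \<circ> \<gamma>"] by simp
qed

lemma ereal_add_less: "c < ereal L \<Longrightarrow> c + ereal d < ereal (L + d)"
  by (cases c) auto

lemma top_of_set_sub: "subtopology (top_of_set S) T = top_of_set (S \<inter> T)"
  by (simp add: subtopology_subtopology)

lemma sameclass:
  assumes U: "LFC X f U" "U \<subseteq> topspace X" and z: "z1 \<in> U" "z2 \<in> U" "f z1 = f z2"
  shows "fclass X f z2 = fclass X f z1"
proof -
  have t1: "z1 \<in> topspace X" "z2 \<in> topspace X" using U(2) z by blast+
  have f1: "z1 \<in> fiber X f z1" unfolding fiber_def using t1(1) by simp
  have f2: "z2 \<in> fiber X f z1" unfolding fiber_def using t1(2) z(3) by simp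
  have "connected_component_of (subtopology X (fiber X f z1)) z1 z2"
    using U(1) z(1,2) f1 f2 unfolding LFC_def by blast
  then show ?thesis using fclass_eq_iff[OF f2 t1(1)] by blast
qed

lemma near:
  assumes lcd: "local_convexity_data X f" and lfc: "locally_fiber_connected X f"
    and contf: "continuous_map X euclidean f"
    and w: "w \<in> topspace X" and delta: "\<delta> > 0"
  shows "\<exists>N. openin X N \<and> w \<in> N \<and> (\<forall>u\<in>N. dist (f u) (f w) < \<delta> \<and>
     (\<forall>L. Xf_dist X f p (fclass X f u) < ereal L \<longrightarrow>
          Xf_dist X f p (fclass X f w) < ereal (L + dist (f u) (f w))))"
proof -
  obtain U C where U: "openin X U" "w \<in> U" "LFC X f U" "convex_cone_with_vertex C (f w)"
    "f ` U \<subseteq> C" "nbhd_in (top_of_set C) (f w) (f ` U)" "open_map (subtopology X U) (top_of_set C) f"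
    by (rule good_nbhd[OF lcd lfc w])
  have Ut: "U \<subseteq> topspace X" using U(1) by (rule openin_subset)
  have convC: "convex C" using U(4) unfolding convex_cone_with_vertex_def by simp
  obtain G where G: "openin (top_of_set C) G" "f w \<in> G" "G \<subseteq> f ` U"
    using U(6) unfolding nbhd_in_def by blast
  obtain T where T: "open T" "G = C \<inter> T" using G(1) unfolding openin_open by blast
  have "f w \<in> T" using G(2) T(2) by blast
  then obtain e where e: "e > 0" "ball (f w) e \<subseteq> T" using T(1) open_contains_ball by blast
  define e' where "e' = min e \<delta>"
  have e': "e' > 0" "e' \<le> e" "e' \<le> \<delta>" unfolding e'_def using e(1) delta by simp_all
  define N where "N = U \<inter> {z \<in> topspace X. f z \<in> ball (f w) e'}"
  have Nopen: "openin X N" unfolding N_def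
    using U(1) preimage_ball_open[OF contf] by (rule openin_Int)
  have wN: "w \<in> N" unfolding N_def using U(2) w e'(1) by simp
  have main: "dist (f u) (f w) < \<delta> \<and>
     (\<forall>L. Xf_dist X f p (fclass X f u) < ereal L \<longrightarrow>
          Xf_dist X f p (fclass X f w) < ereal (L + dist (f u) (f w)))" if u: "u \<in> N" for u
  proof -
    have uU: "u \<in> U" and ut: "u \<in> topspace X" and fu: "dist (f w) (f u) < e'"
      using u unfolding N_def by simp_all
    have duw: "dist (f u) (f w) < e'" using fu by (simp add: dist_commute)
    show ?thesis
    proof (intro conjI allI impI)
      show "dist (f u) (f w) < \<delta>" using duw e'(3) by linarith
      fix L assume L: "Xf_dist X f p (fclass X f u) < ereal L"
      obtain \<gamma> a b where \<gamma>: "a \<le> b" "continuous_map (top_of_set {a..b}) (Xf_top X f) \<gamma>"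
        "\<gamma> a = p" "\<gamma> b = fclass X f u" "curve_length (ftilde f \<circ> \<gamma>) a b < ereal L"
        using Xf_dist_lessE[OF L] by blast
      define A where "A = f u"
      define B where "B = f w"
      define seg where "seg s = A + (s - b) *\<^sub>R (B - A)" for s
      have AC: "A \<in> C" unfolding A_def using U(5) uU by blast
      have BC: "B \<in> C" unfolding B_def using U(5) U(2) by blast
      have segconv: "seg s = (1 - (s - b)) *\<^sub>R A + (s - b) *\<^sub>R B" for s
        unfolding seg_def by (simp add: algebra_simps)
      have segC: "seg s \<in> C" if s: "s \<in> {b..b+1}" for s
        unfolding segconv using s by (intro convexD_alt[OF convC AC BC]) simp_all
      have Ab: "A \<in> ball B e" unfolding A_def B_def using fu e'(2) by simp
      have Bb: "B \<in> ball B e" using e(1) by simp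
      have segb: "seg s \<in> ball B e" if s: "s \<in> {b..b+1}" for s
        unfolding segconv using s by (intro convexD_alt[OF convex_ball Ab Bb]) simp_all
      have segU: "\<exists>z. z \<in> U \<and> f z = seg s" if s: "s \<in> {b..b+1}" for s
      proof -
        have "seg s \<in> T" using segb[OF s] e(2) unfolding B_def by blast
        then have "seg s \<in> G" using segC[OF s] T(2) by blast
        then have "seg s \<in> f ` U" using G(3) by blast
        then obtain z where "z \<in> U" "seg s = f z" by (rule imageE)
        then show ?thesis by metis
      qed
      define \<sigma> where "\<sigma> s = (SOME z. z \<in> U \<and> f z = seg s)" for s
      have \<sigma>: "\<sigma> s \<in> U" "f (\<sigma> s) = seg s" if s: "s \<in> {b..b+1}" for s
        using someI_ex[OF segU[OF s]] unfolding \<sigma>_def by blast+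
      define \<gamma>2 where "\<gamma>2 s = fclass X f (\<sigma> s)" for s
      have seg_b: "seg b = A" unfolding seg_def by simp
      have seg_b1: "seg (b + 1) = B" unfolding seg_def by simp
      have bin: "b \<in> {b..b+1}" "b + 1 \<in> {b..b+1}" by simp_all
      have g2b: "\<gamma>2 b = fclass X f u"
        unfolding \<gamma>2_def using sameclass[OF U(3) Ut uU \<sigma>(1)[OF bin(1)]] \<sigma>(2)[OF bin(1)] seg_b
        unfolding A_def by simp
      have g2b1: "\<gamma>2 (b + 1) = fclass X f w"
        unfolding \<gamma>2_def using sameclass[OF U(3) Ut U(2) \<sigma>(1)[OF bin(2)]] \<sigma>(2)[OF bin(2)] seg_b1
        unfolding B_def by simp
      have contseg: "continuous_on {b..b+1} seg"
        unfolding seg_def by (intro continuous_intros)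
      have contg2: "continuous_map (top_of_set {b..b+1}) (Xf_top X f) \<gamma>2"
        unfolding continuous_map_def
      proof (intro conjI allI impI)
        show "\<gamma>2 \<in> topspace (top_of_set {b..b+1}) \<rightarrow> topspace (Xf_top X f)"
        proof
          fix s assume "s \<in> topspace (top_of_set {b..b+1})"
          then have s: "s \<in> {b..b+1}" by simp
          then have "\<sigma> s \<in> topspace X" using \<sigma>(1)[OF s] Ut by blast
          then show "\<gamma>2 s \<in> topspace (Xf_top X f)" unfolding topspace_Xf \<gamma>2_def by (rule imageI)
        qed
        fix Ob assume Ob: "openin (Xf_top X f) Ob"
        define Ob' where "Ob' = {x \<in> topspace X. fclass X f x \<in> Ob}"
        have Ob'o: "openin X Ob'" using Ob unfolding openin_Xf_top Ob'_def by blast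
        have "openin (subtopology X U) (U \<inter> Ob')" using Ob'o by (rule openin_subtopology_Int2)
        then have "openin (top_of_set C) (f ` (U \<inter> Ob'))" using U(7) unfolding open_map_def by blast
        then obtain T' where T': "open T'" "f ` (U \<inter> Ob') = C \<inter> T'" unfolding openin_open by blast
        have eq: "{s \<in> topspace (top_of_set {b..b+1}). \<gamma>2 s \<in> Ob} = {s \<in> topspace (top_of_set {b..b+1}). seg s \<in> T'}"
        proof (rule Collect_cong)
          fix s
          show "(s \<in> topspace (top_of_set {b..b+1}) \<and> \<gamma>2 s \<in> Ob) \<longleftrightarrow> (s \<in> topspace (top_of_set {b..b+1}) \<and> seg s \<in> T')"
          proof (cases "s \<in> {b..b+1}")
            case False
            then have "s \<notin> topspace (top_of_set {b..b+1})" by simp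
            then show ?thesis by blast
          next
            case True
            have s1: "\<sigma> s \<in> U" "f (\<sigma> s) = seg s" using \<sigma>[OF True] by simp_all
            have s2: "\<sigma> s \<in> topspace X" using s1(1) Ut by blast
            have "\<gamma>2 s \<in> Ob \<longleftrightarrow> seg s \<in> T'"
            proof
              assume "\<gamma>2 s \<in> Ob"
              then have "\<sigma> s \<in> U \<inter> Ob'" unfolding Ob'_def \<gamma>2_def using s1(1) s2 by blast
              then have "f (\<sigma> s) \<in> C \<inter> T'" using T'(2) by blast
              then show "seg s \<in> T'" using s1(2) by simp
            next
              assume "seg s \<in> T'"
              then have "seg s \<in> C \<inter> T'" using segC[OF True] by blast
              then obtain u' where u': "u' \<in> U \<inter> Ob'" "f u' = seg s" using T'(2) by (metis imageE)
              have "fclass X f u' = fclass X f (\<sigma> s)"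
                using sameclass[OF U(3) Ut s1(1), of u'] u'(1) u'(2) s1(2) by simp
              moreover have "fclass X f u' \<in> Ob" using u'(1) unfolding Ob'_def by blast
              ultimately show "\<gamma>2 s \<in> Ob" unfolding \<gamma>2_def by simp
            qed
            then show ?thesis using True by simp
          qed
        qed
        have "openin (top_of_set {b..b+1}) {s \<in> topspace (top_of_set {b..b+1}). seg s \<in> T'}"
        proof (rule openin_continuous_map_preimage)
          show "continuous_map (top_of_set {b..b+1}) euclidean seg" using contseg by simp
          show "openin euclidean T'" using T'(1) by simp
        qed
        then show "openin (top_of_set {b..b+1}) {s \<in> topspace (top_of_set {b..b+1}). \<gamma>2 s \<in> Ob}"
          unfolding eq .
      qed
      define \<gamma>' where "\<gamma>' s = (if s \<le> b then \<gamma> s else \<gamma>2 s)" for s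
      have contg': "continuous_map (top_of_set {a..b+1}) (Xf_top X f) \<gamma>'"
      proof -
        have s1: "{a..b+1} \<inter> {x \<in> topspace (top_of_set {a..b+1}). x \<le> b} = {a..b}"
          using \<gamma>(1) by auto
        have s2: "{a..b+1} \<inter> {x \<in> topspace (top_of_set {a..b+1}). b \<le> x} = {b..b+1}"
          using \<gamma>(1) by auto
        have "continuous_map (top_of_set {a..b+1}) (Xf_top X f) (\<lambda>x. if x \<le> b then \<gamma> x else \<gamma>2 x)"
        proof (rule continuous_map_cases_le)
          show "continuous_map (top_of_set {a..b+1}) euclideanreal (\<lambda>x. x)" by simp
          show "continuous_map (top_of_set {a..b+1}) euclideanreal (\<lambda>x. b)" by simp
          show "continuous_map (subtopology (top_of_set {a..b+1}) {x \<in> topspace (top_of_set {a..b+1}). x \<le> b}) (Xf_top X f) \<gamma>"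
            unfolding top_of_set_sub s1 by (rule \<gamma>(2))
          show "continuous_map (subtopology (top_of_set {a..b+1}) {x \<in> topspace (top_of_set {a..b+1}). b \<le> x}) (Xf_top X f) \<gamma>2"
            unfolding top_of_set_sub s2 by (rule contg2)
          fix x assume "x \<in> topspace (top_of_set {a..b+1})" "x = b"
          then show "\<gamma> x = \<gamma>2 x" using \<gamma>(4) g2b by simp
        qed
        then show ?thesis unfolding \<gamma>'_def .
      qed
      have g'a: "\<gamma>' a = p" unfolding \<gamma>'_def using \<gamma>(1,3) by simp
      have g'b1: "\<gamma>' (b + 1) = fclass X f w" unfolding \<gamma>'_def using g2b1 by simp
      have ab1: "a \<le> b + 1" using \<gamma>(1) by simp
      have "Xf_dist X f p (fclass X f w) \<le> curve_length (ftilde f \<circ> \<gamma>') a (b + 1)"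
        using Xf_dist_le[OF ab1 contg' g'a g'b1] .
      also have "\<dots> \<le> curve_length (ftilde f \<circ> \<gamma>') a b + curve_length (ftilde f \<circ> \<gamma>') b (b + 1)"
        using CL_add[OF \<gamma>(1), of "b + 1"] by simp
      also have "curve_length (ftilde f \<circ> \<gamma>') a b = curve_length (ftilde f \<circ> \<gamma>) a b"
        by (rule CL_cong) (simp add: \<gamma>'_def)
      also have "curve_length (ftilde f \<circ> \<gamma>') b (b + 1) = curve_length seg b (b + 1)"
      proof (rule CL_cong)
        fix s assume s: "b \<le> s" "s \<le> b + 1"
        show "(ftilde f \<circ> \<gamma>') s = seg s"
        proof (cases "s \<le> b")
          case True
          then have "s = b" using s by simp
          then show ?thesis unfolding \<gamma>'_def using \<gamma>(4) ftilde_fclass[OF ut] seg_b unfolding A_def by simp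
        next
          case False
          have sin: "s \<in> {b..b+1}" using s by simp
          have "\<sigma> s \<in> topspace X" using \<sigma>(1)[OF sin] Ut by blast
          then have "ftilde f (\<gamma>2 s) = f (\<sigma> s)" unfolding \<gamma>2_def by (rule ftilde_fclass)
          then show ?thesis unfolding \<gamma>'_def using False \<sigma>(2)[OF sin] by simp
        qed
      qed
      also have "curve_length seg b (b + 1) \<le> ereal (dist A B)"
        unfolding seg_def by (rule CL_linear)
      finally have "Xf_dist X f p (fclass X f w) \<le> curve_length (ftilde f \<circ> \<gamma>) a b + ereal (dist A B)"
        by (simp add: add_left_mono o_def)
      also have "\<dots> < ereal (L + dist A B)" using \<gamma>(5) by (rule ereal_add_less)
      finally show "Xf_dist X f p (fclass X f w) < ereal (L + dist (f u) (f w))"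
        unfolding A_def B_def .
    qed
  qed
  show ?thesis using Nopen wN main by blast
qed

theorem proposition2p26:
  fixes X :: "'a topology" and f :: "'a \<Rightarrow> 'b::euclidean_space"
  assumes "connected_space X" and "locally_connected_space X" and "Hausdorff_space X"
    and "normal_space X" and "first_countable X"
    and "continuous_map X euclidean f" and "closed_map X euclidean f"
    and "local_convexity_data X f" and "locally_fiber_connected X f"
  shows "continuous_map (Xf_top X f) euclidean (ftilde f)
         \<and> proper_map (Xf_top X f) euclidean (ftilde f)
         \<and> (\<forall>x\<in>topspace X. \<forall>r>0.
              compactin (Xf_top X f)
                {q \<in> topspace (Xf_top X f). Xf_dist X f (fclass X f x) q \<le> ereal r})"
proof -
  note conn = assms(1) and haus = assms(3) and norm = assms(4) and contf = assms(6)
    and closedf = assms(7) and lcd = assms(8) and lfc = assms(9)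
  have cont: "continuous_map (Xf_top X f) euclidean (ftilde f)" using contf by (rule cont_ftilde)
  have clm: "closed_map (Xf_top X f) euclidean (ftilde f)" using closedf by (rule closed_ftilde)
  have fibers: "compactin (Xf_top X f) {c \<in> topspace (Xf_top X f). ftilde f c = y}" for y
  proof -
    have eq: "{c \<in> topspace (Xf_top X f). ftilde f c = y} = fclass X f ` {x \<in> topspace X. f x = y}"
    proof
      show "{c \<in> topspace (Xf_top X f). ftilde f c = y} \<subseteq> fclass X f ` {x \<in> topspace X. f x = y}"
      proof
        fix c assume c: "c \<in> {c \<in> topspace (Xf_top X f). ftilde f c = y}"
        then obtain x where x: "x \<in> topspace X" "c = fclass X f x" unfolding topspace_Xf by blast
        have "f x = y" using c x ftilde_fclass[OF x(1), of f] by simp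
        then show "c \<in> fclass X f ` {x \<in> topspace X. f x = y}" using x by blast
      qed
      show "fclass X f ` {x \<in> topspace X. f x = y} \<subseteq> {c \<in> topspace (Xf_top X f). ftilde f c = y}"
      proof
        fix c assume "c \<in> fclass X f ` {x \<in> topspace X. f x = y}"
        then obtain x where x: "x \<in> topspace X" "f x = y" "c = fclass X f x" by blast
        have "ftilde f c = y" using x ftilde_fclass[OF x(1), of f] by simp
        moreover have "c \<in> topspace (Xf_top X f)" unfolding topspace_Xf using x by blast
        ultimately show "c \<in> {c \<in> topspace (Xf_top X f). ftilde f c = y}" by blast
      qed
    qed
    have fin: "finite (fclass X f ` {x \<in> topspace X. f x = y})"
      by (rule fiber_classes_finite[OF conn haus norm contf closedf lcd lfc])
    have sub: "fclass X f ` {x \<in> topspace X. f x = y} \<subseteq> topspace (Xf_top X f)"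
      unfolding topspace_Xf by blast
    show ?thesis unfolding eq using sub fin by (rule finite_imp_compactin)
  qed
  have proper: "proper_map (Xf_top X f) euclidean (ftilde f)"
    unfolding proper_map_def using clm fibers by blast
  have balls: "compactin (Xf_top X f) {q \<in> topspace (Xf_top X f). Xf_dist X f (fclass X f x) q \<le> ereal r}"
    if x: "x \<in> topspace X" for x r
  proof -
    define p where "p = fclass X f x"
    define Bs where "Bs = {q \<in> topspace (Xf_top X f). Xf_dist X f p q \<le> ereal r}"
    define W where "W = {z \<in> topspace X. \<not> Xf_dist X f p (fclass X f z) \<le> ereal r}"
    have Wopen: "openin X W"
    proof (subst openin_subopen, intro ballI)
      fix w assume wW: "w \<in> W"
      then have w: "w \<in> topspace X" and nw: "ereal r < Xf_dist X f p (fclass X f w)"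
        unfolding W_def by auto
      obtain s where s: "ereal r < ereal s" "ereal s < Xf_dist X f p (fclass X f w)"
        using ereal_dense2[OF nw] by blast
      define \<delta> where "\<delta> = (s - r) / 2"
      have d: "\<delta> > 0" "r + 2 * \<delta> = s" using s(1) unfolding \<delta>_def by (simp_all add: field_simps)
      obtain N where N: "openin X N" "w \<in> N" and
        Nu: "\<forall>u\<in>N. dist (f u) (f w) < \<delta> \<and>
         (\<forall>L. Xf_dist X f p (fclass X f u) < ereal L \<longrightarrow>
              Xf_dist X f p (fclass X f w) < ereal (L + dist (f u) (f w)))"
        using near[OF lcd lfc contf w d(1), of p] by blast
      have "N \<subseteq> W"
      proof
        fix u assume u: "u \<in> N"
        have ut: "u \<in> topspace X" using u openin_subset[OF N(1)] by blast
        have "\<not> Xf_dist X f p (fclass X f u) \<le> ereal r"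
        proof
          assume le: "Xf_dist X f p (fclass X f u) \<le> ereal r"
          have "ereal r < ereal (r + \<delta>)" using d(1) by simp
          then have "Xf_dist X f p (fclass X f u) < ereal (r + \<delta>)" using le by (rule le_less_trans[rotated])
          then have "Xf_dist X f p (fclass X f w) < ereal (r + \<delta> + dist (f u) (f w))"
            using Nu u by blast
          also have "\<dots> \<le> ereal s"
          proof -
            have "dist (f u) (f w) < \<delta>" using Nu u by blast
            then show ?thesis using d(2) by simp
          qed
          finally show False using s(2) by simp
        qed
        then show "u \<in> W" unfolding W_def using ut by blast
      qed
      then show "\<exists>T. openin X T \<and> w \<in> T \<and> T \<subseteq> W" using N by blast
    qed
    have Bclosed: "closedin (Xf_top X f) Bs"
      unfolding closedin_def
    proof
      show "Bs \<subseteq> topspace (Xf_top X f)" unfolding Bs_def by blast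
      have eq: "{z \<in> topspace X. fclass X f z \<in> topspace (Xf_top X f) - Bs} = W"
        unfolding W_def Bs_def topspace_Xf by blast
      show "openin (Xf_top X f) (topspace (Xf_top X f) - Bs)"
        unfolding openin_Xf_top
      proof
        show "topspace (Xf_top X f) - Bs \<subseteq> fclass X f ` topspace X" unfolding topspace_Xf by blast
        show "openin X {xa \<in> topspace X. fclass X f xa \<in> topspace (Xf_top X f) - Bs}"
          unfolding eq by (rule Wopen)
      qed
    qed
    define K where "K = {q \<in> topspace (Xf_top X f). ftilde f q \<in> cball (f x) r}"
    have Kc: "compactin (Xf_top X f) K"
    proof -
      have "compactin euclidean (cball (f x) r)" by simp
      then show ?thesis using proper unfolding proper_map_alt K_def by blast
    qed
    have BK: "Bs \<subseteq> K"
    proof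
      fix q assume q: "q \<in> Bs"
      then obtain y where y: "y \<in> topspace X" "q = fclass X f y" unfolding Bs_def topspace_Xf by blast
      have "ereal (dist (f x) (f y)) \<le> Xf_dist X f p q" unfolding p_def y(2)
        by (rule dist_le_Xf_dist[OF x y(1)])
      also have "\<dots> \<le> ereal r" using q unfolding Bs_def by blast
      finally have "dist (f x) (f y) \<le> r" by simp
      then have "ftilde f q \<in> cball (f x) r" unfolding y(2) ftilde_fclass[OF y(1)] by simp
      then show "q \<in> K" unfolding K_def using q unfolding Bs_def by blast
    qed
    have "compactin (Xf_top X f) (Bs \<inter> K)" using Bclosed Kc by (rule closed_Int_compactin)
    moreover have "Bs \<inter> K = Bs" using BK by blast
    ultimately show ?thesis unfolding Bs_def p_def by simp
  qed
  show ?thesis using cont proper balls by blast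
qed

end
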